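(* Let $G$ be a finite group. Then every self-homotopy equivalence of the quasi-schemoid $\widetilde{S}(\imath G)=(\widetilde{\imath G},\{\mathcal{G}_s\}_{s\in G})$ is an isomorphism.
   Context: For a groupoid $\mathcal{H}$, the quasi-schemoid $\widetilde{S}(\mathcal{H})=(\widetilde{\mathcal{H}},S)$ has $ob(\widetilde{\mathcal{H}})=mor(\mathcal{H})$, $\mathrm{Hom}_{\widetilde{\mathcal{H}}}(g,h)=\{(h,g)\}$ if $t(h)=t(g)$ and empty otherwise (composition $(k,h)\circ(h,g)=(k,g)$), and partition $S=\{\mathcal{G}_f\}_{f\in mor(\mathcal{H})}$ with $\mathcal{G}_f=\{(k,l)\mid k^{-1}l=f\}$. For a group $G$, $\imath G$ is $G$ regarded as a groupoid with one object; thus objects of $\widetilde{\imath G}$ are elements of $G$, there is exactly one morphism $(h,g)\colon g\to h$ for all $g,h$, and $\mathcal{G}_s=\{(k,l)\mid k^{-1}l=s\}$. A morphism of quasi-schemoids is a functor sending each block of the source partition into some block of the target partition. Product: $(\mathcal{C},S)\times(\mathcal{E},S')=(\mathcal{C}\times\mathcal{E},\{\sigma\times\tau\})$. $[1]$ has objects $0,1$ and one non-identity morphism $0\to1$; $I=([1],\{\{f\}\}_{f})$. A homotopy $H\colon F\Rightarrow G$ is a morphism $H\colon(\mathcal{C},S)\times I\to(\mathcal{D},S')$ with $H\circ\varepsilon_0=F$, $H\circ\varepsilon_1=G$ ($\varepsilon_i(a)=(a,i)$, $\varepsilon_i(f)=(f,1_i)$). $F\sim G$ means there is a homotopy $F\Rightarrow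 G$ or $G\Rightarrow F$; $F\simeq G$ means a finite chain $F=F_0\sim\cdots\sim F_n=G$. A self-homotopy equivalence of $A$ is a morphism $F\colon A\to A$ for which there is $G'\colon A\to A$ with $FG'\simeq1$ and $G'F\simeq1$. *)

theory Defs
  imports "HOL-Algebra.Group"
begin

text \<open>A (small) category equipped with a partition of its morphisms (quasi-schemoid data).
  cmp g f denotes the composite g o f (defined when tgt f = src g).\<close>
record ('o, 'm) qsch =
  obs :: "'o set"
  mors :: "'m set"
  src :: "'m \<Rightarrow> 'o"
  tgt :: "'m \<Rightarrow> 'o"
  cmp :: "'m \<Rightarrow> 'm \<Rightarrow> 'm"
  idm :: "'o \<Rightarrow> 'm"
  blocks :: "'m set set"

type_synonym ('o1, 'm1, 'o2, 'm2) qfun = "('o1 \<Rightarrow> 'o2) \<times> ('m1 \<Rightarrow> 'm2)"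

definition is_functor :: "('o1,'m1) qsch \<Rightarrow> ('o2,'m2) qsch \<Rightarrow> ('o1,'m1,'o2,'m2) qfun \<Rightarrow> bool" where
  "is_functor C D F \<longleftrightarrow>
     (\<forall>a\<in>obs C. fst F a \<in> obs D) \<and>
     (\<forall>f\<in>mors C. snd F f \<in> mors D \<and> src D (snd F f) = fst F (src C f)
                   \<and> tgt D (snd F f) = fst F (tgt C f)) \<and>
     (\<forall>f\<in>mors C. \<forall>g\<in>mors C. tgt C f = src C g \<longrightarrow>
                   snd F (cmp C g f) = cmp D (snd F g) (snd F f)) \<and>
     (\<forall>a\<in>obs C. snd F (idm C a) = idm D (fst F a))"

definition qs_morph :: "('o1,'m1) qsch \<Rightarrow> ('o2,'m2) qsch \<Rightarrow> ('o1,'m1,'o2,'m2) qfun \<Rightarrow> bool" where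
  "qs_morph C D F \<longleftrightarrow> is_functor C D F \<and> (\<forall>\<sigma>\<in>blocks C. \<exists>\<tau>\<in>blocks D. snd F ` \<sigma> \<subseteq> \<tau>)"

definition qf_comp :: "('o2,'m2,'o3,'m3) qfun \<Rightarrow> ('o1,'m1,'o2,'m2) qfun \<Rightarrow> ('o1,'m1,'o3,'m3) qfun" where
  "qf_comp G F = (fst G \<circ> fst F, snd G \<circ> snd F)"

definition qf_id :: "('o,'m,'o,'m) qfun" where
  "qf_id = (id, id)"

definition qf_eq :: "('o1,'m1) qsch \<Rightarrow> ('o1,'m1,'o2,'m2) qfun \<Rightarrow> ('o1,'m1,'o2,'m2) qfun \<Rightarrow> bool" where
  "qf_eq C F G \<longleftrightarrow> (\<forall>a\<in>obs C. fst F a = fst G a) \<and> (\<forall>f\<in>mors C. snd F f = snd G f)"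

definition qs_prod :: "('o1,'m1) qsch \<Rightarrow> ('o2,'m2) qsch \<Rightarrow> ('o1 \<times> 'o2, 'm1 \<times> 'm2) qsch" where
  "qs_prod C E = \<lparr> obs = obs C \<times> obs E, mors = mors C \<times> mors E,
     src = (\<lambda>(f,g). (src C f, src E g)), tgt = (\<lambda>(f,g). (tgt C f, tgt E g)),
     cmp = (\<lambda>(f,g) (f',g'). (cmp C f f', cmp E g g')),
     idm = (\<lambda>(a,b). (idm C a, idm E b)),
     blocks = {\<sigma> \<times> \<tau> | \<sigma> \<tau>. \<sigma> \<in> blocks C \<and> \<tau> \<in> blocks E} \<rparr>"

text \<open>The interval I: category [1] (objects 0,1; morphisms (i,j) : i -> j with i \<le> j),
  with the discrete partition into singletons.\<close>
definition qs_I :: "(nat, nat \<times> nat) qsch" where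
  "qs_I = \<lparr> obs = {0, 1}, mors = {(0,0), (1,1), (0,1)},
     src = fst, tgt = snd, cmp = (\<lambda>(j,k) (i,j'). (i,k)), idm = (\<lambda>i. (i,i)),
     blocks = {{f} | f. f \<in> {(0::nat,0::nat), (1,1), (0,1)}} \<rparr>"

definition qs_eps :: "nat \<Rightarrow> ('o, 'm, 'o \<times> nat, 'm \<times> (nat \<times> nat)) qfun" where
  "qs_eps i = ((\<lambda>a. (a, i)), (\<lambda>f. (f, (i, i))))"

definition qs_homotopy :: "('o1,'m1) qsch \<Rightarrow> ('o2,'m2) qsch \<Rightarrow> ('o1,'m1,'o2,'m2) qfun \<Rightarrow> ('o1,'m1,'o2,'m2) qfun \<Rightarrow> bool" where
  "qs_homotopy C D F G \<longleftrightarrow> qs_morph C D F \<and> qs_morph C D G \<and>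
     (\<exists>H. qs_morph (qs_prod C qs_I) D H \<and>
          qf_eq C (qf_comp H (qs_eps 0)) F \<and> qf_eq C (qf_comp H (qs_eps 1)) G)"

definition qs_sim :: "('o1,'m1) qsch \<Rightarrow> ('o2,'m2) qsch \<Rightarrow> ('o1,'m1,'o2,'m2) qfun \<Rightarrow> ('o1,'m1,'o2,'m2) qfun \<Rightarrow> bool" where
  "qs_sim C D F G \<longleftrightarrow> qs_homotopy C D F G \<or> qs_homotopy C D G F"

definition qs_htpc :: "('o1,'m1) qsch \<Rightarrow> ('o2,'m2) qsch \<Rightarrow> ('o1,'m1,'o2,'m2) qfun \<Rightarrow> ('o1,'m1,'o2,'m2) qfun \<Rightarrow> bool" where
  "qs_htpc C D F G \<longleftrightarrow> (qs_sim C D)\<^sup>*\<^sup>* F G"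

definition self_htpy_equiv :: "('o,'m) qsch \<Rightarrow> ('o,'m,'o,'m) qfun \<Rightarrow> bool" where
  "self_htpy_equiv A F \<longleftrightarrow> qs_morph A A F \<and>
     (\<exists>G'. qs_morph A A G' \<and> qs_htpc A A (qf_comp F G') qf_id \<and> qs_htpc A A (qf_comp G' F) qf_id)"

definition qs_iso :: "('o1,'m1) qsch \<Rightarrow> ('o2,'m2) qsch \<Rightarrow> ('o1,'m1,'o2,'m2) qfun \<Rightarrow> bool" where
  "qs_iso C D F \<longleftrightarrow> qs_morph C D F \<and>
     (\<exists>G. qs_morph D C G \<and> qf_eq C (qf_comp G F) qf_id \<and> qf_eq D (qf_comp F G) qf_id)"

text \<open>The quasi-schemoid S~(iG) of a group G: objects are the elements of G, the unique
  morphism g -> h is (h,g), and blocks G_s = {(k,l) | k^-1 l = s} for s in G.\<close>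
definition tilde_S_grp :: "('g, 'b) monoid_scheme \<Rightarrow> ('g, 'g \<times> 'g) qsch" where
  "tilde_S_grp G = \<lparr> obs = carrier G, mors = carrier G \<times> carrier G,
     src = snd, tgt = fst, cmp = (\<lambda>(k,h') (h,g). (k,g)), idm = (\<lambda>g. (g,g)),
     blocks = (\<lambda>s. {(k,l). k \<in> carrier G \<and> l \<in> carrier G \<and> inv\<^bsub>G\<^esub> k \<otimes>\<^bsub>G\<^esub> l = s}) ` carrier G \<rparr>"

end

theory Submission
  imports Defs
begin

lemma tS_simps:
  "obs (tilde_S_grp G) = carrier G" "mors (tilde_S_grp G) = carrier G \<times> carrier G"
  "src (tilde_S_grp G) = snd" "tgt (tilde_S_grp G) = fst"
  "cmp (tilde_S_grp G) = (\<lambda>(k,h') (h,g). (k,g))" "idm (tilde_S_grp G) = (\<lambda>g. (g,g))"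
  "blocks (tilde_S_grp G) = (\<lambda>s. {(k,l). k \<in> carrier G \<and> l \<in> carrier G \<and> inv\<^bsub>G\<^esub> k \<otimes>\<^bsub>G\<^esub> l = s}) ` carrier G"
  by (simp_all add: tilde_S_grp_def)

lemma morph_facts:
  assumes "qs_morph (tilde_S_grp G) (tilde_S_grp G) F"
  shows "\<forall>x\<in>carrier G. fst F x \<in> carrier G"
    and "\<forall>h\<in>carrier G. \<forall>g\<in>carrier G. snd F (h,g) = (fst F h, fst F g)"
proof -
  have f: "is_functor (tilde_S_grp G) (tilde_S_grp G) F" using assms by (simp add: qs_morph_def)
  then have f1: "\<forall>a\<in>carrier G. fst F a \<in> carrier G"
    and f2: "\<forall>f\<in>carrier G \<times> carrier G. snd (snd F f) = fst F (snd f) \<and> fst (snd F f) = fst F (fst f)"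
    unfolding is_functor_def tS_simps by blast+
  show "\<forall>x\<in>carrier G. fst F x \<in> carrier G" by (rule f1)
  show "\<forall>h\<in>carrier G. \<forall>g\<in>carrier G. snd F (h,g) = (fst F h, fst F g)"
  proof (intro ballI)
    fix h g assume "h \<in> carrier G" "g \<in> carrier G"
    with f2 have "snd (snd F (h,g)) = fst F g" "fst (snd F (h,g)) = fst F h"
      by auto
    then show "snd F (h,g) = (fst F h, fst F g)" by (metis prod.collapse)
  qed
qed

context group
begin

lemma block_fact:
  assumes "qs_morph (tilde_S_grp G) (tilde_S_grp G) F"
    and "a \<in> carrier G" "b \<in> carrier G" "a' \<in> carrier G" "b' \<in> carrier G"
    and "inv\<^bsub>G\<^esub> a \<otimes>\<^bsub>G\<^esub> b = inv\<^bsub>G\<^esub> a' \<otimes>\<^bsub>G\<^esub> b'"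
  shows "inv\<^bsub>G\<^esub> (fst F a) \<otimes>\<^bsub>G\<^esub> fst F b = inv\<^bsub>G\<^esub> (fst F a') \<otimes>\<^bsub>G\<^esub> fst F b'"
proof -
  define blk where "blk = (\<lambda>s. {(k,l). k \<in> carrier G \<and> l \<in> carrier G \<and> inv k \<otimes> l = s})"
  have "blk (inv a \<otimes> b) \<in> blocks (tilde_S_grp G)"
    using assms by (simp add: tS_simps blk_def)
  then obtain \<tau> where "\<tau> \<in> blocks (tilde_S_grp G)" and sub: "snd F ` blk (inv a \<otimes> b) \<subseteq> \<tau>"
    using assms(1) unfolding qs_morph_def by blast
  then obtain t where tau: "\<tau> = blk t" by (auto simp: tS_simps blk_def)
  have "(a,b) \<in> blk (inv a \<otimes> b)" "(a',b') \<in> blk (inv a \<otimes> b)" using assms by (auto simp: blk_def)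
  then have "snd F (a,b) \<in> blk t" "snd F (a',b') \<in> blk t" using sub tau by auto
  then show ?thesis using morph_facts(2)[OF assms(1)] assms by (auto simp: blk_def)
qed

lemma homotopy_fact:
  assumes "qs_homotopy (tilde_S_grp G) (tilde_S_grp G) F F'"
  shows "\<exists>c\<in>carrier G. \<forall>x\<in>carrier G. fst F x = fst F' x \<otimes>\<^bsub>G\<^esub> c"
proof -
  define blk where "blk = (\<lambda>s. {(k,l). k \<in> carrier G \<and> l \<in> carrier G \<and> inv k \<otimes> l = s})"
  from assms(1) obtain H where mF: "qs_morph (tilde_S_grp G) (tilde_S_grp G) F"
    and mF': "qs_morph (tilde_S_grp G) (tilde_S_grp G) F'"
    and mH: "qs_morph (qs_prod (tilde_S_grp G) qs_I) (tilde_S_grp G) H"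
    and e0: "qf_eq (tilde_S_grp G) (qf_comp H (qs_eps 0)) F"
    and e1: "qf_eq (tilde_S_grp G) (qf_comp H (qs_eps 1)) F'"
    unfolding qs_homotopy_def by blast
  have "blk \<one> \<times> {(0,1)} \<in> blocks (qs_prod (tilde_S_grp G) qs_I)"
    unfolding qs_prod_def qs_I_def by (auto simp: tS_simps blk_def)
  then obtain \<tau> where "\<tau> \<in> blocks (tilde_S_grp G)" and sub: "snd H ` (blk \<one> \<times> {(0,1)}) \<subseteq> \<tau>"
    using mH unfolding qs_morph_def by blast
  then obtain t where tau: "\<tau> = blk t" and t: "t \<in> carrier G" by (auto simp: tS_simps blk_def)
  have fH: "is_functor (qs_prod (tilde_S_grp G) qs_I) (tilde_S_grp G) H"
    using mH by (simp add: qs_morph_def)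
  show ?thesis
  proof (rule bexI[OF _ t], intro ballI)
    fix x assume x: "x \<in> carrier G"
    let ?m = "((x,x),(0::nat,1::nat))"
    have mm: "?m \<in> mors (qs_prod (tilde_S_grp G) qs_I)"
      using x unfolding qs_prod_def qs_I_def by (simp add: tS_simps)
    have fH2: "\<forall>f\<in>mors (qs_prod (tilde_S_grp G) qs_I). src (tilde_S_grp G) (snd H f) = fst H (src (qs_prod (tilde_S_grp G) qs_I) f)
                   \<and> tgt (tilde_S_grp G) (snd H f) = fst H (tgt (qs_prod (tilde_S_grp G) qs_I) f)"
      using fH unfolding is_functor_def by blast
    have "src (qs_prod (tilde_S_grp G) qs_I) ?m = (x,0)" "tgt (qs_prod (tilde_S_grp G) qs_I) ?m = (x,1)"
      by (simp_all add: qs_prod_def qs_I_def tS_simps)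
    then have "snd (snd H ?m) = fst H (x,0)" "fst (snd H ?m) = fst H (x,1)"
      using fH2 mm by (simp_all add: tS_simps)
    moreover have "fst H (x,0) = fst F x" "fst H (x,1) = fst F' x"
      using e0 e1 x by (auto simp: qf_eq_def qf_comp_def qs_eps_def tS_simps)
    ultimately have "snd H ?m = (fst F' x, fst F x)" by (metis prod.collapse)
    moreover have "?m \<in> blk \<one> \<times> {(0,1)}" using x by (simp add: blk_def)
    ultimately have "(fst F' x, fst F x) \<in> blk t" using sub tau by force
    then have eq: "inv (fst F' x) \<otimes> fst F x = t" and c: "fst F' x \<in> carrier G" "fst F x \<in> carrier G"
      by (auto simp: blk_def)
    have "fst F' x \<otimes> t = fst F' x \<otimes> (inv (fst F' x) \<otimes> fst F x)"
      using eq by simp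
    also have "\<dots> = (fst F' x \<otimes> inv (fst F' x)) \<otimes> fst F x"
      using c by (simp add: m_assoc[symmetric])
    finally show "fst F x = fst F' x \<otimes> t" using c by simp
  qed
qed

lemma htpc_fact:
  assumes "qs_htpc (tilde_S_grp G) (tilde_S_grp G) P qf_id"
  shows "\<exists>c\<in>carrier G. \<forall>x\<in>carrier G. fst P x = x \<otimes>\<^bsub>G\<^esub> c"
proof -
  from assms(1) have "(qs_sim (tilde_S_grp G) (tilde_S_grp G))\<^sup>*\<^sup>* P qf_id"
    by (simp add: qs_htpc_def)
  then show ?thesis
  proof (induction rule: converse_rtranclp_induct)
    case base
    then show ?case by (intro bexI[of _ \<one>]) (auto simp: qf_id_def)
  next
    case (step P P')
    from step.IH obtain c where c: "c \<in> carrier G" and hc: "\<forall>x\<in>carrier G. fst P' x = x \<otimes> c" by blast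
    from step.hyps(1) show ?case unfolding qs_sim_def
    proof
      assume h: "qs_homotopy (tilde_S_grp G) (tilde_S_grp G) P P'"
      from homotopy_fact[OF h] obtain d where d: "d \<in> carrier G"
        and hd: "\<forall>x\<in>carrier G. fst P x = fst P' x \<otimes> d" by blast
      show ?thesis using c d hc hd by (intro bexI[of _ "c \<otimes> d"]) (auto simp: m_assoc)
    next
      assume h: "qs_homotopy (tilde_S_grp G) (tilde_S_grp G) P' P"
      from homotopy_fact[OF h] obtain d where d: "d \<in> carrier G"
        and hd: "\<forall>x\<in>carrier G. fst P' x = fst P x \<otimes> d" by blast
      have mP: "\<forall>x\<in>carrier G. fst P x \<in> carrier G"
        using h morph_facts(1) unfolding qs_homotopy_def by blast
      show ?thesis
      proof (intro bexI[of _ "c \<otimes> inv d"] ballI)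
        fix x assume x: "x \<in> carrier G"
        have "fst P x = fst P x \<otimes> d \<otimes> inv d" using mP x d by (simp add: m_assoc)
        also have "\<dots> = x \<otimes> c \<otimes> inv d" using hd hc x by simp
        finally show "fst P x = x \<otimes> (c \<otimes> inv d)" using x c d by (simp add: m_assoc)
      qed (use c d in simp)
    qed
  qed
qed

lemma main_lemma:
  fixes F :: "('a, 'a \<times> 'a, 'a, 'a \<times> 'a) qfun"
  assumes "self_htpy_equiv (tilde_S_grp G) F"
  shows "qs_iso (tilde_S_grp G) (tilde_S_grp G) F"
proof -
  let ?C = "tilde_S_grp G"
  define f where "f = fst F"
  from assms(1) obtain G' where mF: "qs_morph ?C ?C F" and mG: "qs_morph ?C ?C G'"
    and h1: "qs_htpc ?C ?C (qf_comp F G') qf_id" and h2: "qs_htpc ?C ?C (qf_comp G' F) qf_id"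
    unfolding self_htpy_equiv_def by blast
  have fc: "\<forall>x\<in>carrier G. f x \<in> carrier G" using morph_facts(1)[OF mF] f_def by simp
  have Fs: "\<forall>h\<in>carrier G. \<forall>g\<in>carrier G. snd F (h,g) = (f h, f g)" using morph_facts(2)[OF mF] f_def by simp
  have gc: "\<forall>x\<in>carrier G. fst G' x \<in> carrier G" using morph_facts(1)[OF mG] by simp
  obtain c where c: "c \<in> carrier G" and hc: "\<forall>x\<in>carrier G. f (fst G' x) = x \<otimes> c"
    using htpc_fact[OF h1] by (auto simp: qf_comp_def f_def)
  obtain d where d: "d \<in> carrier G" and hd: "\<forall>x\<in>carrier G. fst G' (f x) = x \<otimes> d"
    using htpc_fact[OF h2] by (auto simp: qf_comp_def f_def)
  have inj: "inj_on f (carrier G)"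
  proof (rule inj_onI)
    fix x y assume "x \<in> carrier G" "y \<in> carrier G" "f x = f y"
    then have "fst G' (f x) = fst G' (f y)" by simp
    then have "x \<otimes> d = y \<otimes> d" using hd \<open>x \<in> carrier G\<close> \<open>y \<in> carrier G\<close> by simp
    then show "x = y" using \<open>x \<in> carrier G\<close> \<open>y \<in> carrier G\<close> d by simp
  qed
  have surj: "f ` carrier G = carrier G"
  proof
    show "f ` carrier G \<subseteq> carrier G" using fc by auto
    show "carrier G \<subseteq> f ` carrier G"
    proof
      fix y assume y: "y \<in> carrier G"
      have "f (fst G' (y \<otimes> inv c)) = y \<otimes> inv c \<otimes> c" using hc y c by simp
      also have "\<dots> = y" using y c by (simp add: m_assoc)
      finally show "y \<in> f ` carrier G" using gc y c by (metis image_eqI m_closed inv_closed)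
    qed
  qed
  define g where "g = the_inv_into (carrier G) f"
  have gcar: "\<forall>x\<in>carrier G. g x \<in> carrier G"
    using the_inv_into_into[OF inj] surj g_def by auto
  have fg: "\<forall>x\<in>carrier G. f (g x) = x"
    using f_the_inv_into_f[OF inj] surj g_def by auto
  have gf: "\<forall>x\<in>carrier G. g (f x) = x"
    using the_inv_into_f_f[OF inj] g_def by auto
  have conv: "inv a \<otimes> b = inv a' \<otimes> b'"
    if ab: "a \<in> carrier G" "b \<in> carrier G" "a' \<in> carrier G" "b' \<in> carrier G"
      and eq: "inv (f a) \<otimes> f b = inv (f a') \<otimes> f b'" for a b a' b'
  proof -
    have u1: "inv (f \<one>) \<otimes> f (inv a \<otimes> b) = inv (f a) \<otimes> f b"
      using block_fact[OF mF, of \<one> "inv a \<otimes> b" a b] ab f_def by simp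
    have u2: "inv (f \<one>) \<otimes> f (inv a' \<otimes> b') = inv (f a') \<otimes> f b'"
      using block_fact[OF mF, of \<one> "inv a' \<otimes> b'" a' b'] ab f_def by simp
    have "f (inv a \<otimes> b) = f (inv a' \<otimes> b')"
    proof -
      have "inv (f \<one>) \<otimes> f (inv a \<otimes> b) = inv (f \<one>) \<otimes> f (inv a' \<otimes> b')"
        using u1 u2 eq by simp
      moreover have "inv (f \<one>) \<in> carrier G" "f (inv a \<otimes> b) \<in> carrier G" "f (inv a' \<otimes> b') \<in> carrier G"
        using fc ab by auto
      ultimately show ?thesis by (simp add: Units_eq)
    qed
    then show ?thesis using inj ab by (meson inj_onD inv_closed m_closed)
  qed
  define G0 where "G0 = (g, (\<lambda>(h,k). (g h, g k)))"
  have mG0: "qs_morph ?C ?C G0"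
    unfolding qs_morph_def
  proof
    have A: "\<forall>a\<in>obs ?C. fst G0 a \<in> obs ?C" using gcar by (simp add: tS_simps G0_def)
    have B: "\<forall>m\<in>mors ?C. snd G0 m \<in> mors ?C \<and> src ?C (snd G0 m) = fst G0 (src ?C m) \<and> tgt ?C (snd G0 m) = fst G0 (tgt ?C m)"
    proof
      fix m assume "m \<in> mors ?C"
      then obtain h k where m: "m = (h,k)" "h \<in> carrier G" "k \<in> carrier G" by (auto simp: tS_simps)
      show "snd G0 m \<in> mors ?C \<and> src ?C (snd G0 m) = fst G0 (src ?C m) \<and> tgt ?C (snd G0 m) = fst G0 (tgt ?C m)"
        using m gcar by (simp add: tS_simps G0_def)
    qed
    have C: "\<forall>m1\<in>mors ?C. \<forall>m2\<in>mors ?C. tgt ?C m1 = src ?C m2 \<longrightarrow> snd G0 (cmp ?C m2 m1) = cmp ?C (snd G0 m2) (snd G0 m1)"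
    proof (intro ballI impI)
      fix m1 m2 assume "m1 \<in> mors ?C" "m2 \<in> mors ?C" "tgt ?C m1 = src ?C m2"
      obtain h k h' k' where m: "m1 = (h,k)" "m2 = (h',k')" by (cases m1, cases m2) auto
      show "snd G0 (cmp ?C m2 m1) = cmp ?C (snd G0 m2) (snd G0 m1)"
        using m by (simp add: tS_simps G0_def)
    qed
    have D: "\<forall>a\<in>obs ?C. snd G0 (idm ?C a) = idm ?C (fst G0 a)"
      by (simp add: tS_simps G0_def)
    show "is_functor ?C ?C G0"
      unfolding is_functor_def using A B C D by blast
    show "\<forall>\<sigma>\<in>blocks ?C. \<exists>\<tau>\<in>blocks ?C. snd G0 ` \<sigma> \<subseteq> \<tau>"
    proof
      fix \<sigma> assume "\<sigma> \<in> blocks ?C"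
      then obtain s where s: "s \<in> carrier G"
        and sig: "\<sigma> = {(k,l). k \<in> carrier G \<and> l \<in> carrier G \<and> inv k \<otimes> l = s}"
        by (auto simp: tS_simps)
      let ?t = "inv (g \<one>) \<otimes> g s"
      show "\<exists>\<tau>\<in>blocks ?C. snd G0 ` \<sigma> \<subseteq> \<tau>"
      proof (rule bexI[of _ "{(k,l). k \<in> carrier G \<and> l \<in> carrier G \<and> inv k \<otimes> l = ?t}"])
        show "snd G0 ` \<sigma> \<subseteq> {(k,l). k \<in> carrier G \<and> l \<in> carrier G \<and> inv k \<otimes> l = ?t}"
        proof
          fix y assume "y \<in> snd G0 ` \<sigma>"
          then obtain k l where kl: "k \<in> carrier G" "l \<in> carrier G" "inv k \<otimes> l = s"
            and y: "y = (g k, g l)" by (auto simp: sig G0_def)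
          have "inv (f (g k)) \<otimes> f (g l) = inv (f (g \<one>)) \<otimes> f (g s)"
            using fg kl s by simp
          moreover have "g k \<in> carrier G" "g l \<in> carrier G" "g \<one> \<in> carrier G" "g s \<in> carrier G"
            using gcar kl s by auto
          ultimately have "inv (g k) \<otimes> g l = ?t" using conv[of "g k" "g l" "g \<one>" "g s"] by blast
          then show "y \<in> {(k,l). k \<in> carrier G \<and> l \<in> carrier G \<and> inv k \<otimes> l = ?t}"
            using y gcar kl by simp
        qed
        show "{(k,l). k \<in> carrier G \<and> l \<in> carrier G \<and> inv k \<otimes> l = ?t} \<in> blocks ?C"
          using gcar s by (simp add: tS_simps)
      qed
    qed
  qed
  show ?thesis
    unfolding qs_iso_def
  proof (intro conjI exI[of _ G0])
    show "qs_morph ?C ?C F" by fact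
    show "qs_morph ?C ?C G0" by fact
    show "qf_eq ?C (qf_comp G0 F) qf_id"
      unfolding qf_eq_def
    proof (intro conjI ballI)
      fix a assume "a \<in> obs ?C" then show "fst (qf_comp G0 F) a = fst qf_id a"
        using gf by (simp add: tS_simps G0_def qf_comp_def qf_id_def f_def)
    next
      fix m assume "m \<in> mors ?C"
      then obtain h k where m: "m = (h,k)" "h \<in> carrier G" "k \<in> carrier G" by (auto simp: tS_simps)
      have "snd F (h,k) = (f h, f k)" using Fs m by simp
      then show "snd (qf_comp G0 F) m = snd qf_id m"
        using gf m by (simp add: G0_def qf_comp_def qf_id_def)
    qed
    show "qf_eq ?C (qf_comp F G0) qf_id"
      unfolding qf_eq_def
    proof (intro conjI ballI)
      fix a assume "a \<in> obs ?C" then show "fst (qf_comp F G0) a = fst qf_id a"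
        using fg by (simp add: tS_simps G0_def qf_comp_def qf_id_def f_def)
    next
      fix m assume "m \<in> mors ?C"
      then obtain h k where m: "m = (h,k)" "h \<in> carrier G" "k \<in> carrier G" by (auto simp: tS_simps)
      have "snd F (g h, g k) = (f (g h), f (g k))" using Fs m gcar by simp
      then show "snd (qf_comp F G0) m = snd qf_id m"
        using fg m by (simp add: G0_def qf_comp_def qf_id_def)
    qed
  qed
qed

end

theorem proposition4p5:
  fixes G :: "('g, 'b) monoid_scheme" and F :: "('g, 'g \<times> 'g, 'g, 'g \<times> 'g) qfun"
  assumes "group G" and "finite (carrier G)"
    and "self_htpy_equiv (tilde_S_grp G) F"
  shows "qs_iso (tilde_S_grp G) (tilde_S_grp G) F"
  using group.main_lemma[OF assms(1) assms(3)] .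

end
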